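(* Let $(X,\mathcal U)$ be a non-archimedean uniform space and $\mathcal B$ a base of $\mathcal U$ consisting of equivalence relations. Then: (1) realizing $A_{NA}(X,\mathcal U)$ on the free abelian group $A(X)$, and letting $\langle\varepsilon\rangle$ denote the subgroup of $A(X)$ generated by $\{x-y:(x,y)\in\varepsilon\}$, the family $\{\langle\varepsilon\rangle:\varepsilon\in\mathcal B\}$ is a base of neighborhoods of $0$ in $A_{NA}(X,\mathcal U)$; (2) realizing $B_{NA}(X,\mathcal U)$ on the free Boolean group $B(X)$, and letting $\langle\varepsilon\rangle$ denote the subgroup of $B(X)$ generated by $\{x-y:(x,y)\in\varepsilon\}$, the family $\{\langle\varepsilon\rangle:\varepsilon\in\mathcal B\}$ is a base of neighborhoods of $0$ in $B_{NA}(X,\mathcal U)$.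
   Context: A uniform space is non-archimedean if its uniformity has a base of equivalence relations. A topological group is non-archimedean if it has a local base at the identity of open subgroups; Boolean if every non-identity element has order 2. $A_{NA}(X,\mathcal U)$ (resp. $B_{NA}(X,\mathcal U)$) is the abelian (resp. Boolean) non-archimedean Hausdorff group with uniformly continuous $i\colon X\to G$ through which every uniformly continuous map into such a group factors uniquely by a continuous homomorphism; it is algebraically $A(X)$ (resp. $B(X)$) with $i$ the inclusion of generators. *)

theory Defs
  imports "HOL-Analysis.Analysis" "HOL-Algebra.Free_Abelian_Groups" "HOL-Algebra.Generated_Groups"
begin

definition uniformity_on :: "'a set \<Rightarrow> ('a \<times> 'a) set set \<Rightarrow> bool" where
  "uniformity_on X U \<longleftrightarrow>
     U \<noteq> {} \<and>
     (\<forall>e\<in>U. Id_on X \<subseteq> e \<and> e \<subseteq> X \<times> X) \<and>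
     (\<forall>e\<in>U. \<forall>f. e \<subseteq> f \<and> f \<subseteq> X \<times> X \<longrightarrow> f \<in> U) \<and>
     (\<forall>e\<in>U. \<forall>f\<in>U. e \<inter> f \<in> U) \<and>
     (\<forall>e\<in>U. e\<inverse> \<in> U) \<and>
     (\<forall>e\<in>U. \<exists>f\<in>U. f O f \<subseteq> e)"

definition uniformity_base :: "('a \<times> 'a) set set \<Rightarrow> ('a \<times> 'a) set set \<Rightarrow> bool" where
  "uniformity_base U B \<longleftrightarrow> B \<subseteq> U \<and> (\<forall>e\<in>U. \<exists>b\<in>B. b \<subseteq> e)"

definition non_archimedean_uniform_space :: "'a set \<Rightarrow> ('a \<times> 'a) set set \<Rightarrow> bool" where
  "non_archimedean_uniform_space X U \<longleftrightarrow>
     uniformity_on X U \<and> (\<exists>B. uniformity_base U B \<and> (\<forall>e\<in>B. equiv X e))"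

definition topological_group :: "('g, 'm) monoid_scheme \<Rightarrow> 'g topology \<Rightarrow> bool" where
  "topological_group G T \<longleftrightarrow>
     group G \<and> topspace T = carrier G \<and>
     continuous_map (prod_topology T T) T (\<lambda>(x, y). x \<otimes>\<^bsub>G\<^esub> y) \<and>
     continuous_map T T (\<lambda>x. inv\<^bsub>G\<^esub> x)"

definition non_archimedean_group :: "('g, 'm) monoid_scheme \<Rightarrow> 'g topology \<Rightarrow> bool" where
  "non_archimedean_group G T \<longleftrightarrow>
     topological_group G T \<and>
     (\<forall>W. openin T W \<and> \<one>\<^bsub>G\<^esub> \<in> W \<longrightarrow> (\<exists>H. subgroup H G \<and> openin T H \<and> H \<subseteq> W))"

definition boolean_group :: "('g, 'm) monoid_scheme \<Rightarrow> bool" where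
  "boolean_group G \<longleftrightarrow> group G \<and> (\<forall>x\<in>carrier G. x \<otimes>\<^bsub>G\<^esub> x = \<one>\<^bsub>G\<^esub>)"

definition nbhd_base_at_one :: "('g, 'm) monoid_scheme \<Rightarrow> 'g topology \<Rightarrow> 'g set set \<Rightarrow> bool" where
  "nbhd_base_at_one G T F \<longleftrightarrow>
     (\<forall>V\<in>F. V \<subseteq> topspace T \<and> (\<exists>W. openin T W \<and> \<one>\<^bsub>G\<^esub> \<in> W \<and> W \<subseteq> V)) \<and>
     (\<forall>W. openin T W \<and> \<one>\<^bsub>G\<^esub> \<in> W \<longrightarrow> (\<exists>V\<in>F. V \<subseteq> W))"

text \<open>Uniform continuity of a map from a uniform space into an abelian topological group
  (for abelian groups the left and right group uniformities coincide).\<close>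
definition unif_cont_into_group ::
  "'a set \<Rightarrow> ('a \<times> 'a) set set \<Rightarrow> ('g, 'm) monoid_scheme \<Rightarrow> 'g topology \<Rightarrow> ('a \<Rightarrow> 'g) \<Rightarrow> bool" where
  "unif_cont_into_group X U G T f \<longleftrightarrow>
     f ` X \<subseteq> carrier G \<and>
     (\<forall>W. openin T W \<and> \<one>\<^bsub>G\<^esub> \<in> W \<longrightarrow>
        (\<exists>e\<in>U. \<forall>(x, y)\<in>e. f x \<otimes>\<^bsub>G\<^esub> inv\<^bsub>G\<^esub> (f y) \<in> W))"

definition cont_hom ::
  "('g, 'm) monoid_scheme \<Rightarrow> 'g topology \<Rightarrow> ('h, 'n) monoid_scheme \<Rightarrow> 'h topology \<Rightarrow> ('g \<Rightarrow> 'h) \<Rightarrow> bool" where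
  "cont_hom G T H S h \<longleftrightarrow> h \<in> hom G H \<and> continuous_map T S h"

text \<open>B(X): finite subsets of X under symmetric difference; the generator x is {x}.\<close>
definition free_Boolean_group :: "'a set \<Rightarrow> 'a set monoid" where
  "free_Boolean_group X =
     \<lparr>carrier = {A. finite A \<and> A \<subseteq> X}, monoid.mult = (\<lambda>A B. (A - B) \<union> (B - A)), one = {}\<rparr>"

text \<open>T is a topology on A(X) realizing A_NA(X,U). The universal property is quantified
  over target groups whose carrier type is the carrier type of A(X).\<close>
definition is_A_NA :: "'a set \<Rightarrow> ('a \<times> 'a) set set \<Rightarrow> ('a \<Rightarrow>\<^sub>0 int) topology \<Rightarrow> bool" where
  "is_A_NA X U T \<longleftrightarrow>
     comm_group (free_Abelian_group X) \<and>
     non_archimedean_group (free_Abelian_group X) T \<and> Hausdorff_space T \<and>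
     unif_cont_into_group X U (free_Abelian_group X) T frag_of \<and>
     (\<forall>(H :: ('a \<Rightarrow>\<^sub>0 int) monoid) S f.
        comm_group H \<and> non_archimedean_group H S \<and> Hausdorff_space S \<and>
        unif_cont_into_group X U H S f \<longrightarrow>
          (\<exists>h. cont_hom (free_Abelian_group X) T H S h \<and> (\<forall>x\<in>X. h (frag_of x) = f x)) \<and>
          (\<forall>h1 h2. cont_hom (free_Abelian_group X) T H S h1 \<and> (\<forall>x\<in>X. h1 (frag_of x) = f x) \<and>
                   cont_hom (free_Abelian_group X) T H S h2 \<and> (\<forall>x\<in>X. h2 (frag_of x) = f x) \<longrightarrow>
                   (\<forall>g\<in>carrier (free_Abelian_group X). h1 g = h2 g)))"

definition is_B_NA :: "'a set \<Rightarrow> ('a \<times> 'a) set set \<Rightarrow> 'a set topology \<Rightarrow> bool" where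
  "is_B_NA X U T \<longleftrightarrow>
     boolean_group (free_Boolean_group X) \<and>
     non_archimedean_group (free_Boolean_group X) T \<and> Hausdorff_space T \<and>
     unif_cont_into_group X U (free_Boolean_group X) T (\<lambda>x. {x}) \<and>
     (\<forall>(H :: 'a set monoid) S f.
        boolean_group H \<and> non_archimedean_group H S \<and> Hausdorff_space S \<and>
        unif_cont_into_group X U H S f \<longrightarrow>
          (\<exists>h. cont_hom (free_Boolean_group X) T H S h \<and> (\<forall>x\<in>X. h {x} = f x)) \<and>
          (\<forall>h1 h2. cont_hom (free_Boolean_group X) T H S h1 \<and> (\<forall>x\<in>X. h1 {x} = f x) \<and>
                   cont_hom (free_Boolean_group X) T H S h2 \<and> (\<forall>x\<in>X. h2 {x} = f x) \<longrightarrow>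
                   (\<forall>g\<in>carrier (free_Boolean_group X). h1 g = h2 g)))"

end

theory Submission
  imports Defs
begin

lemma discrete_na:
  assumes "group H"
  shows "non_archimedean_group H (discrete_topology (carrier H))"
    and "Hausdorff_space (discrete_topology (carrier H))"
proof -
  interpret group H by fact
  show "Hausdorff_space (discrete_topology (carrier H))" by simp
  have tg: "topological_group H (discrete_topology (carrier H))"
    unfolding topological_group_def
    by (auto simp: assms prod_topology_discrete_topology[symmetric])
  show "non_archimedean_group H (discrete_topology (carrier H))"
    unfolding non_archimedean_group_def
    using tg triv_subgroup by (auto simp: openin_discrete_topology)
qed

lemma key_open:
  assumes "topological_group G T" "group H" "h \<in> hom G H"
    and "continuous_map T (discrete_topology (carrier H)) h"
    and "\<And>g. g \<in> carrier G \<Longrightarrow> h g = \<one>\<^bsub>H\<^esub> \<Longrightarrow> g \<in> K"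
  shows "\<exists>W. openin T W \<and> \<one>\<^bsub>G\<^esub> \<in> W \<and> W \<subseteq> K"
proof -
  have tG: "topspace T = carrier G" "group G" using assms(1) by (auto simp: topological_group_def)
  have "openin (discrete_topology (carrier H)) {\<one>\<^bsub>H\<^esub>}"
    using monoid.one_closed[OF group.is_monoid[OF assms(2)]] by (simp add: openin_discrete_topology)
  then have o: "openin T {g \<in> topspace T. h g \<in> {\<one>\<^bsub>H\<^esub>}}"
    using openin_continuous_map_preimage[OF assms(4)] by blast
  have "h \<one>\<^bsub>G\<^esub> = \<one>\<^bsub>H\<^esub>"
    using assms(2,3) tG(2) by (simp add: group_hom.hom_one group_hom_axioms_def group_hom_def)
  then show ?thesis using o tG assms(5)
    by (intro exI[of _ "{g \<in> topspace T. h g \<in> {\<one>\<^bsub>H\<^esub>}}"]) (auto intro: monoid.one_closed group.is_monoid)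
qed

lemma small_gen:
  assumes na: "non_archimedean_group G T"
    and uc: "unif_cont_into_group X U G T f"
    and base: "uniformity_base U B"
    and W: "openin T W" "\<one>\<^bsub>G\<^esub> \<in> W"
  shows "\<exists>e\<in>B. generate G {f x \<otimes>\<^bsub>G\<^esub> inv\<^bsub>G\<^esub> (f y) | x y. (x, y) \<in> e} \<subseteq> W"
proof -
  have grp: "group G" using na by (auto simp: non_archimedean_group_def topological_group_def)
  obtain K where K: "subgroup K G" "openin T K" "K \<subseteq> W"
    using na W by (auto simp: non_archimedean_group_def)
  have "\<one>\<^bsub>G\<^esub> \<in> K" using K(1) subgroup.one_closed by blast
  then obtain e where e: "e \<in> U" "\<forall>(x, y)\<in>e. f x \<otimes>\<^bsub>G\<^esub> inv\<^bsub>G\<^esub> (f y) \<in> K"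
    using uc K(2) by (auto simp: unif_cont_into_group_def)
  obtain b where b: "b \<in> B" "b \<subseteq> e" using base e(1) by (auto simp: uniformity_base_def)
  have "{f x \<otimes>\<^bsub>G\<^esub> inv\<^bsub>G\<^esub> (f y) | x y. (x, y) \<in> b} \<subseteq> K" using b e(2) by auto
  then have "generate G {f x \<otimes>\<^bsub>G\<^esub> inv\<^bsub>G\<^esub> (f y) | x y. (x, y) \<in> b} \<subseteq> K"
    using group.generate_subgroup_incl[OF grp _ K(1)] by blast
  then show ?thesis using b K(3) by blast
qed

lemma rep_exists:
  assumes "equiv X e"
  obtains r where "\<And>x. x \<in> X \<Longrightarrow> r x \<in> X \<and> (x, r x) \<in> e"
    "\<And>x y. (x, y) \<in> e \<Longrightarrow> r x = r y"
proof -
  define r where "r x = (SOME y. y \<in> e `` {x})" for x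
  have 1: "x \<in> X \<Longrightarrow> r x \<in> X \<and> (x, r x) \<in> e" for x
  proof -
    assume x: "x \<in> X"
    then have "x \<in> e `` {x}" using assms by (auto simp: equiv_def refl_on_def)
    then have "r x \<in> e `` {x}" unfolding r_def by (rule someI)
    then show ?thesis using assms by (auto simp: equiv_def refl_on_def)
  qed
  have 2: "(x, y) \<in> e \<Longrightarrow> r x = r y" for x y
    using equiv_class_eq[OF assms] unfolding r_def by metis
  show ?thesis using 1 2 that by blast
qed



lemma partA:
  assumes base: "uniformity_base U B" and eqv: "\<forall>e\<in>B. equiv X e"
    and A: "is_A_NA X U T"
  shows "nbhd_base_at_one (free_Abelian_group X) T
              ((\<lambda>e. generate (free_Abelian_group X) {frag_of x - frag_of y | x y. (x, y) \<in> e}) ` B)"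
proof -
  let ?G = "free_Abelian_group X"
  have na: "non_archimedean_group ?G T" and uc: "unif_cont_into_group X U ?G T frag_of"
    using A by (auto simp: is_A_NA_def)
  have tg: "topological_group ?G T" using na by (simp add: non_archimedean_group_def)
  have top: "topspace T = carrier ?G" using tg by (simp add: topological_group_def)
  have gen_eq: "{frag_of x - frag_of y | x y. (x, y) \<in> e} =
      {frag_of x \<otimes>\<^bsub>?G\<^esub> inv\<^bsub>?G\<^esub> (frag_of y) | x y. (x, y) \<in> e}" if "e \<in> B" for e
  proof -
    have "e \<subseteq> X \<times> X" using eqv that by (auto simp: equiv_def refl_on_def)
    then show ?thesis by force
  qed
  have S_sub: "{frag_of x - frag_of y | x y. (x, y) \<in> e} \<subseteq> carrier ?G" if "e \<in> B" for e
  proof -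
    have "e \<subseteq> X \<times> X" using eqv that by (auto simp: equiv_def refl_on_def)
    then show ?thesis using keys_diff by fastforce
  qed
  show ?thesis
    unfolding nbhd_base_at_one_def
  proof (intro conjI ballI allI impI)
    fix V assume "V \<in> (\<lambda>e. generate ?G {frag_of x - frag_of y | x y. (x, y) \<in> e}) ` B"
    then obtain e where e: "e \<in> B" and V: "V = generate ?G {frag_of x - frag_of y | x y. (x, y) \<in> e}"
      by blast
    have sgV: "subgroup V ?G"
      using group.generate_is_subgroup[OF group_free_Abelian_group S_sub[OF e]] V by simp
    show "V \<subseteq> topspace T" using subgroup.subset[OF sgV] top by simp
    have eq: "equiv X e" using eqv e by blast
    obtain r where r1: "\<And>x. x \<in> X \<Longrightarrow> r x \<in> X \<and> (x, r x) \<in> e"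
      and r2: "\<And>x y. (x, y) \<in> e \<Longrightarrow> r x = r y"
      using rep_exists[OF eq] by metis
    let ?H = "free_Abelian_group (r ` X)"
    let ?S = "discrete_topology (carrier ?H)"
    let ?f = "\<lambda>x. frag_of (r x)"
    have Hd: "non_archimedean_group ?H ?S" "Hausdorff_space ?S"
      using discrete_na[OF group_free_Abelian_group] by auto
    have ucf: "unif_cont_into_group X U ?H ?S ?f"
      unfolding unif_cont_into_group_def
    proof (intro conjI allI impI)
      show "?f ` X \<subseteq> carrier ?H" by auto
      fix W assume W: "openin ?S W \<and> \<one>\<^bsub>?H\<^esub> \<in> W"
      have "e \<in> U" using e base by (auto simp: uniformity_base_def)
      moreover have "\<forall>(x, y)\<in>e. ?f x \<otimes>\<^bsub>?H\<^esub> inv\<^bsub>?H\<^esub> (?f y) \<in> W"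
      proof clarify
        fix x y assume xy: "(x, y) \<in> e"
        then have "y \<in> X" using eq by (auto simp: equiv_def refl_on_def)
        then have "inv\<^bsub>?H\<^esub> (?f y) = - ?f y" by (intro inv_free_Abelian_group) auto
        then show "?f x \<otimes>\<^bsub>?H\<^esub> inv\<^bsub>?H\<^esub> (?f y) \<in> W" using r2[OF xy] W by simp
      qed
      ultimately show "\<exists>e\<in>U. \<forall>(x, y)\<in>e. ?f x \<otimes>\<^bsub>?H\<^esub> inv\<^bsub>?H\<^esub> (?f y) \<in> W" by blast
    qed
    obtain h where h: "cont_hom ?G T ?H ?S h" "\<forall>x\<in>X. h (frag_of x) = ?f x"
      using A Hd ucf abelian_free_Abelian_group unfolding is_A_NA_def by blast
    have hom: "h \<in> hom ?G ?H" and hc: "continuous_map T ?S h" using h(1) by (auto simp: cont_hom_def)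
    define q where "q = frag_extend (\<lambda>x. frag_of (r x))"
    have hq: "h g = q g" if "g \<in> carrier ?G" for g
    proof -
      have "Poly_Mapping.keys g \<subseteq> X" using that by simp
      then show ?thesis
      proof (rule free_Abelian_group_induct[where P="\<lambda>g. h g = q g"])
        show "h 0 = q 0" using hom
          by (metis (no_types, lifting) frag_extend_0 group_free_Abelian_group group_hom.hom_one
              group_hom_axioms.intro group_hom_def one_free_Abelian_group q_def)
      next
        fix x y :: "'a \<Rightarrow>\<^sub>0 int"
        assume "Poly_Mapping.keys x \<subseteq> X" "Poly_Mapping.keys y \<subseteq> X" "h x = q x" "h y = q y"
        then show "h (x - y) = q (x - y)" using hom_frag_diff[OF hom] by (simp add: q_def frag_extend_diff)
      next
        fix a assume "a \<in> X"
        then show "h (frag_of a) = q (frag_of a)" using h(2) by (simp add: q_def)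
      qed
    qed
    have gq: "g - q g \<in> V" if "g \<in> carrier ?G" for g
    proof -
      have "Poly_Mapping.keys g \<subseteq> X" using that by simp
      then show ?thesis
      proof (rule free_Abelian_group_induct[where P="\<lambda>g. g - q g \<in> V"])
        show "0 - q 0 \<in> V" using subgroup.one_closed[OF sgV] by (simp add: q_def)
      next
        fix x y :: "'a \<Rightarrow>\<^sub>0 int"
        assume 2: "Poly_Mapping.keys x \<subseteq> X" "Poly_Mapping.keys y \<subseteq> X" "x - q x \<in> V" "y - q y \<in> V"
        have yc: "Poly_Mapping.keys (y - q y) \<subseteq> X"
        proof -
          have "y - q y \<in> carrier ?G" using subgroup.subset[OF sgV] 2(4) by (rule subsetD)
          then show ?thesis by (simp only: carrier_free_Abelian_group_iff)
        qed
        have "(x - q x) \<otimes>\<^bsub>?G\<^esub> inv\<^bsub>?G\<^esub> (y - q y) \<in> V"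
          using 2(3,4) sgV by (intro subgroup.m_closed subgroup.m_inv_closed)
        moreover have "inv\<^bsub>?G\<^esub> (y - q y) = - (y - q y)"
          by (rule inv_free_Abelian_group[OF yc])
        moreover have "q (x - y) = q x - q y" by (simp add: q_def frag_extend_diff)
        ultimately show "(x - y) - q (x - y) \<in> V"
          by (simp only: mult_free_Abelian_group) (simp add: algebra_simps)
      next
        fix a assume "a \<in> X"
        then have "frag_of a - frag_of (r a) \<in> {frag_of x - frag_of y | x y. (x, y) \<in> e}"
          using r1 by blast
        then show "frag_of a - q (frag_of a) \<in> V" using V by (simp add: q_def generate.incl)
      qed
    qed
    show "\<exists>W. openin T W \<and> \<one>\<^bsub>?G\<^esub> \<in> W \<and> W \<subseteq> V"
    proof (rule key_open[OF tg group_free_Abelian_group hom hc])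
      fix g assume g: "g \<in> carrier ?G" "h g = \<one>\<^bsub>?H\<^esub>"
      then have "q g = 0" using hq by simp
      then show "g \<in> V" using gq[OF g(1)] by simp
    qed
  next
    fix W assume W: "openin T W \<and> \<one>\<^bsub>?G\<^esub> \<in> W"
    obtain e where "e \<in> B" "generate ?G {frag_of x \<otimes>\<^bsub>?G\<^esub> inv\<^bsub>?G\<^esub> (frag_of y) | x y. (x, y) \<in> e} \<subseteq> W"
      using small_gen[OF na uc base] W by blast
    then show "\<exists>V\<in>(\<lambda>e. generate ?G {frag_of x - frag_of y | x y. (x, y) \<in> e}) ` B. V \<subseteq> W"
      using gen_eq by auto
  qed
qed


lemma boolean_free_Boolean_group: "boolean_group (free_Boolean_group S)"
proof -
  have g: "group (free_Boolean_group S)"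
    by (rule groupI) (auto simp: free_Boolean_group_def)
  show ?thesis using g by (auto simp: boolean_group_def free_Boolean_group_def)
qed

lemma mult_fBg: "A \<otimes>\<^bsub>free_Boolean_group S\<^esub> B = (A - B) \<union> (B - A)"
  by (simp add: free_Boolean_group_def)

lemma one_fBg: "\<one>\<^bsub>free_Boolean_group S\<^esub> = {}"
  by (simp add: free_Boolean_group_def)

lemma carrier_fBg: "A \<in> carrier (free_Boolean_group S) \<longleftrightarrow> finite A \<and> A \<subseteq> S"
  by (simp add: free_Boolean_group_def)

lemma inv_fBg: "A \<in> carrier (free_Boolean_group S) \<Longrightarrow> inv\<^bsub>free_Boolean_group S\<^esub> A = A"
  using boolean_free_Boolean_group[of S]
  by (intro group.inv_equality) (auto simp: boolean_group_def)

lemma card_insert_fiber: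
  assumes "finite A" "x \<notin> A"
  shows "{w \<in> insert x A. r w = z} = (if r x = z then insert x {w \<in> A. r w = z} else {w \<in> A. r w = z})"
    and "card {w \<in> insert x A. r w = z} = (if r x = z then Suc (card {w \<in> A. r w = z}) else card {w \<in> A. r w = z})"
proof -
  show 1: "{w \<in> insert x A. r w = z} = (if r x = z then insert x {w \<in> A. r w = z} else {w \<in> A. r w = z})"
    by auto
  show "card {w \<in> insert x A. r w = z} = (if r x = z then Suc (card {w \<in> A. r w = z}) else card {w \<in> A. r w = z})"
    using assms by (subst 1) auto
qed

lemma q_insert:
  assumes "finite A" "x \<notin> A"
  shows "{z. odd (card {w \<in> insert x A. r w = z})} =
    ({z. odd (card {w \<in> A. r w = z})} - {r x}) \<union> ({r x} - {z. odd (card {w \<in> A. r w = z})})"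
  using card_insert_fiber(2)[OF assms, of r] by auto

lemma partB:
  assumes base: "uniformity_base U B" and eqv: "\<forall>e\<in>B. equiv X e"
    and BN: "is_B_NA X U T"
  shows "nbhd_base_at_one (free_Boolean_group X) T
              ((\<lambda>e. generate (free_Boolean_group X)
                      {{x} \<otimes>\<^bsub>free_Boolean_group X\<^esub> inv\<^bsub>free_Boolean_group X\<^esub> {y} | x y. (x, y) \<in> e}) ` B)"
proof -
  let ?G = "free_Boolean_group X"
  have na: "non_archimedean_group ?G T" and uc: "unif_cont_into_group X U ?G T (\<lambda>x. {x})"
    using BN by (auto simp: is_B_NA_def)
  have tg: "topological_group ?G T" using na by (simp add: non_archimedean_group_def)
  have top: "topspace T = carrier ?G" using tg by (simp add: topological_group_def)
  have grpG: "group ?G" using boolean_free_Boolean_group by (auto simp: boolean_group_def)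
  have S_sub: "{{x} \<otimes>\<^bsub>?G\<^esub> inv\<^bsub>?G\<^esub> {y} | x y. (x, y) \<in> e} \<subseteq> carrier ?G" if "e \<in> B" for e
  proof -
    have "e \<subseteq> X \<times> X" using eqv that by (auto simp: equiv_def refl_on_def)
    show ?thesis
    proof clarify
      fix x y assume "(x, y) \<in> e"
      then have xy: "x \<in> X" "y \<in> X" using \<open>e \<subseteq> X \<times> X\<close> by auto
      then have "inv\<^bsub>?G\<^esub> {y} = {y}" by (intro inv_fBg) (simp add: carrier_fBg)
      then show "{x} \<otimes>\<^bsub>?G\<^esub> inv\<^bsub>?G\<^esub> {y} \<in> carrier ?G"
        using xy by (auto simp: carrier_fBg mult_fBg)
    qed
  qed
  show ?thesis
    unfolding nbhd_base_at_one_def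
  proof (intro conjI ballI allI impI)
    fix V assume "V \<in> (\<lambda>e. generate ?G {{x} \<otimes>\<^bsub>?G\<^esub> inv\<^bsub>?G\<^esub> {y} | x y. (x, y) \<in> e}) ` B"
    then obtain e where e: "e \<in> B" and V: "V = generate ?G {{x} \<otimes>\<^bsub>?G\<^esub> inv\<^bsub>?G\<^esub> {y} | x y. (x, y) \<in> e}"
      by blast
    have sgV: "subgroup V ?G"
      using group.generate_is_subgroup[OF grpG S_sub[OF e]] V by simp
    show "V \<subseteq> topspace T" using subgroup.subset[OF sgV] top by simp
    have eq: "equiv X e" using eqv e by blast
    obtain r where r1: "\<And>x. x \<in> X \<Longrightarrow> r x \<in> X \<and> (x, r x) \<in> e"
      and r2: "\<And>x y. (x, y) \<in> e \<Longrightarrow> r x = r y"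
      using rep_exists[OF eq] by metis
    let ?H = "free_Boolean_group (r ` X)"
    let ?S = "discrete_topology (carrier ?H)"
    let ?f = "\<lambda>x. {r x}"
    have grpH: "group ?H" using boolean_free_Boolean_group by (auto simp: boolean_group_def)
    have Hd: "non_archimedean_group ?H ?S" "Hausdorff_space ?S"
      using discrete_na[OF grpH] by auto
    have ucf: "unif_cont_into_group X U ?H ?S ?f"
      unfolding unif_cont_into_group_def
    proof (intro conjI allI impI)
      show "?f ` X \<subseteq> carrier ?H" by (auto simp: carrier_fBg)
      fix W assume W: "openin ?S W \<and> \<one>\<^bsub>?H\<^esub> \<in> W"
      have "e \<in> U" using e base by (auto simp: uniformity_base_def)
      moreover have "\<forall>(x, y)\<in>e. ?f x \<otimes>\<^bsub>?H\<^esub> inv\<^bsub>?H\<^esub> (?f y) \<in> W"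
      proof clarify
        fix x y assume xy: "(x, y) \<in> e"
        then have "x \<in> X" using eq by (auto simp: equiv_def refl_on_def)
        then have "?f x \<in> carrier ?H" by (auto simp: carrier_fBg)
        then show "?f x \<otimes>\<^bsub>?H\<^esub> inv\<^bsub>?H\<^esub> (?f y) \<in> W"
          using r2[OF xy] W group.r_inv[OF grpH] by simp
      qed
      ultimately show "\<exists>e\<in>U. \<forall>(x, y)\<in>e. ?f x \<otimes>\<^bsub>?H\<^esub> inv\<^bsub>?H\<^esub> (?f y) \<in> W" by blast
    qed
    obtain h where h: "cont_hom ?G T ?H ?S h" "\<forall>x\<in>X. h {x} = ?f x"
    proof -
      have "\<forall>(H :: 'a set monoid) S f.
        boolean_group H \<and> non_archimedean_group H S \<and> Hausdorff_space S \<and>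
        unif_cont_into_group X U H S f \<longrightarrow>
          (\<exists>h. cont_hom ?G T H S h \<and> (\<forall>x\<in>X. h {x} = f x))"
        using BN unfolding is_B_NA_def by blast
      then have "\<exists>h. cont_hom ?G T ?H ?S h \<and> (\<forall>x\<in>X. h {x} = ?f x)"
        using Hd ucf boolean_free_Boolean_group by blast
      then show ?thesis using that by blast
    qed
    have hom: "h \<in> hom ?G ?H" and hc: "continuous_map T ?S h" using h(1) by (auto simp: cont_hom_def)
    define q where "q A = {z. odd (card {w \<in> A. r w = z})}" for A
    have q0: "q {} = {}" by (simp add: q_def)
    have qi: "q (insert x A) = (q A - {r x}) \<union> ({r x} - q A)" if "finite A" "x \<notin> A" for x A
      unfolding q_def by (rule q_insert[OF that])
    have ins: "insert x A = A \<otimes>\<^bsub>?G\<^esub> {x}" if "x \<notin> A" for x A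
      using that by (auto simp: mult_fBg)
    have hq: "h A = q A" if "A \<in> carrier ?G" for A
    proof -
      have "finite A" "A \<subseteq> X" using that by (auto simp: carrier_fBg)
      then show ?thesis
      proof (induction A rule: finite_induct)
        case empty
        have "h \<one>\<^bsub>?G\<^esub> = \<one>\<^bsub>?H\<^esub>"
          using hom grpG grpH by (simp add: group_hom.hom_one group_hom_axioms_def group_hom_def)
        then show ?case by (simp add: one_fBg q0)
      next
        case (insert x A)
        have "h (insert x A) = h (A \<otimes>\<^bsub>?G\<^esub> {x})" using ins insert(2) by metis
        also have "\<dots> = h A \<otimes>\<^bsub>?H\<^esub> h {x}"
          using hom insert by (intro hom_mult) (auto simp: carrier_fBg)
        also have "\<dots> = q (insert x A)"
          using insert h(2) by (simp add: qi mult_fBg)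
        finally show ?case .
      qed
    qed
    have gq: "A \<otimes>\<^bsub>?G\<^esub> q A \<in> V" if "A \<in> carrier ?G" for A
    proof -
      have "finite A" "A \<subseteq> X" using that by (auto simp: carrier_fBg)
      then show ?thesis
      proof (induction A rule: finite_induct)
        case empty
        then show ?case using subgroup.one_closed[OF sgV] by (simp add: q0 one_fBg mult_fBg)
      next
        case (insert x A)
        have x: "x \<in> X" using insert by auto
        have "{x} \<otimes>\<^bsub>?G\<^esub> inv\<^bsub>?G\<^esub> {r x} \<in> V"
          using r1[OF x] V by (auto intro!: generate.incl)
        then have gen: "{x} \<otimes>\<^bsub>?G\<^esub> {r x} \<in> V"
          using r1[OF x] by (simp add: inv_fBg carrier_fBg)
        have "(A \<otimes>\<^bsub>?G\<^esub> q A) \<otimes>\<^bsub>?G\<^esub> ({x} \<otimes>\<^bsub>?G\<^esub> {r x}) \<in> V"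
        proof -
          have ih: "A \<otimes>\<^bsub>?G\<^esub> q A \<in> V" using insert.IH insert.prems by auto
          show ?thesis using subgroup.m_closed[OF sgV ih gen] .
        qed
        moreover have "(A \<otimes>\<^bsub>?G\<^esub> q A) \<otimes>\<^bsub>?G\<^esub> ({x} \<otimes>\<^bsub>?G\<^esub> {r x})
            = insert x A \<otimes>\<^bsub>?G\<^esub> q (insert x A)"
          using insert(1,2) by (auto simp: qi mult_fBg)
        ultimately show ?case by simp
      qed
    qed
    show "\<exists>W. openin T W \<and> \<one>\<^bsub>?G\<^esub> \<in> W \<and> W \<subseteq> V"
    proof (rule key_open[OF tg grpH hom hc])
      fix g assume g: "g \<in> carrier ?G" "h g = \<one>\<^bsub>?H\<^esub>"
      then have "q g = {}" using hq by (simp add: one_fBg)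
      then show "g \<in> V" using gq[OF g(1)] by (simp add: mult_fBg)
    qed
  next
    fix W assume W: "openin T W \<and> \<one>\<^bsub>?G\<^esub> \<in> W"
    obtain e where "e \<in> B" "generate ?G {{x} \<otimes>\<^bsub>?G\<^esub> inv\<^bsub>?G\<^esub> {y} | x y. (x, y) \<in> e} \<subseteq> W"
      using small_gen[OF na uc base] W by blast
    then show "\<exists>V\<in>(\<lambda>e. generate ?G {{x} \<otimes>\<^bsub>?G\<^esub> inv\<^bsub>?G\<^esub> {y} | x y. (x, y) \<in> e}) ` B. V \<subseteq> W"
      by auto
  qed
qed

theorem theorem4p14:
  fixes X :: "'a set" and U :: "('a \<times> 'a) set set" and B :: "('a \<times> 'a) set set"
  assumes "non_archimedean_uniform_space X U"
    and "uniformity_base U B"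
    and "\<forall>e\<in>B. equiv X e"
  shows "(\<forall>T. is_A_NA X U T \<longrightarrow>
            nbhd_base_at_one (free_Abelian_group X) T
              ((\<lambda>e. generate (free_Abelian_group X) {frag_of x - frag_of y | x y. (x, y) \<in> e}) ` B))
       \<and> (\<forall>T. is_B_NA X U T \<longrightarrow>
            nbhd_base_at_one (free_Boolean_group X) T
              ((\<lambda>e. generate (free_Boolean_group X)
                      {{x} \<otimes>\<^bsub>free_Boolean_group X\<^esub> inv\<^bsub>free_Boolean_group X\<^esub> {y} | x y. (x, y) \<in> e}) ` B))"
  using partA[OF assms(2,3)] partB[OF assms(2,3)] by blast

end
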